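(* Let $\varphi$ be a setfunction on a set-algebra $(J,\mathcal{B})$ with $\varphi(\emptyset)=0$. Then the quotient set $Q(\varphi)=\bigcup_{k\in\mathbb{N}}Q_k(\varphi)$ is quotient-closed and has the common lift property.
   Context: A set-algebra $(J,\mathcal{B})$ is a family $\mathcal{B}$ of subsets of $J$ containing $\emptyset$ and closed under complement and finite union. A setfunction on $(J,\mathcal{B})$ is a map $\varphi\colon\mathcal{B}\to\mathbb{R}$; all setfunctions satisfy $\varphi(\emptyset)=0$. A setfunction is finite if it is defined on $(J,2^J)$ with $J$ finite. $\mathbb{N}$ denotes the positive integers and $[k]=\{1,\dots,k\}$. For $k\in\mathbb{N}$ and a measurable map $F\colon J\to[k]$ (i.e. $F^{-1}(i)\in\mathcal{B}$ for every $i$), the quotient $\varphi\circ F^{-1}$ is the setfunction on $(\,[k],2^{[k]})$ given by $A\mapsto\varphi(F^{-1}(A))$. $Q_k(\varphi)\subseteq\mathbb{R}^{2^k}$ is the set of all such quotients of $\varphi$ on $[k]$. A setfunction $\varphi$ is a lift of $\varphi'$ if $\varphi'$ is a quotient of $\varphi$. A family $A$ of finite setfunctions is quotient-closed if every quotient of a function in $A$ belongs to $A$; it has the common lift property if every finite subset of $A$ has a common lift belonging to $A$. *)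

theory Defs
  imports Complex_Main
begin

definition set_algebra :: "'a set \<Rightarrow> 'a set set \<Rightarrow> bool" where
  "set_algebra J B \<longleftrightarrow> B \<subseteq> Pow J \<and> {} \<in> B \<and> (\<forall>A\<in>B. J - A \<in> B)
     \<and> (\<forall>A\<in>B. \<forall>C\<in>B. A \<union> C \<in> B)"

definition meas_map :: "'a set \<Rightarrow> 'a set set \<Rightarrow> nat \<Rightarrow> ('a \<Rightarrow> nat) \<Rightarrow> bool" where
  "meas_map J B k F \<longleftrightarrow> (\<forall>j\<in>J. F j \<in> {1..k}) \<and> (\<forall>i\<in>{1..k}. {j\<in>J. F j = i} \<in> B)"

text \<open>The quotient setfunction phi o F^{-1} on ([k], 2^[k]); set to 0 outside 2^[k]
  (values off the domain are irrelevant and normalised to 0).\<close>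
definition quot :: "'a set \<Rightarrow> ('a set \<Rightarrow> real) \<Rightarrow> nat \<Rightarrow> ('a \<Rightarrow> nat) \<Rightarrow> nat set \<Rightarrow> real" where
  "quot J \<phi> k F = (\<lambda>A. if A \<subseteq> {1..k} then \<phi> {j\<in>J. F j \<in> A} else 0)"

definition Qk :: "'a set \<Rightarrow> 'a set set \<Rightarrow> ('a set \<Rightarrow> real) \<Rightarrow> nat \<Rightarrow> (nat set \<Rightarrow> real) set" where
  "Qk J B \<phi> k = {quot J \<phi> k F | F. meas_map J B k F}"

text \<open>Finite setfunctions are represented as pairs (ground set, function) with the
  ground set a finite set of naturals.\<close>
definition Q :: "'a set \<Rightarrow> 'a set set \<Rightarrow> ('a set \<Rightarrow> real) \<Rightarrow> (nat set \<times> (nat set \<Rightarrow> real)) set" where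
  "Q J B \<phi> = {({1..k}, \<psi>) | k \<psi>. k \<ge> 1 \<and> \<psi> \<in> Qk J B \<phi> k}"

definition is_quotient :: "nat set \<Rightarrow> (nat set \<Rightarrow> real) \<Rightarrow> nat set \<Rightarrow> (nat set \<Rightarrow> real) \<Rightarrow> bool" where
  "is_quotient J \<psi> J' \<psi>' \<longleftrightarrow>
     (\<exists>m\<ge>1. J' = {1..m} \<and> (\<exists>G. meas_map J (Pow J) m G \<and> \<psi>' = quot J \<psi> m G))"

definition quotient_closed :: "(nat set \<times> (nat set \<Rightarrow> real)) set \<Rightarrow> bool" where
  "quotient_closed A \<longleftrightarrow>
     (\<forall>(J, \<psi>)\<in>A. \<forall>J' \<psi>'. is_quotient J \<psi> J' \<psi>' \<longrightarrow> (J', \<psi>') \<in> A)"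

definition common_lift_property :: "(nat set \<times> (nat set \<Rightarrow> real)) set \<Rightarrow> bool" where
  "common_lift_property A \<longleftrightarrow>
     (\<forall>S\<subseteq>A. finite S \<longrightarrow> (\<exists>(J, \<psi>)\<in>A. \<forall>(J', \<psi>')\<in>S. is_quotient J \<psi> J' \<psi>'))"

end

theory Submission
  imports Defs
begin

lemma sa_basic:
  assumes "set_algebra J B"
  shows "{} \<in> B" "J \<in> B" "\<And>A. A \<in> B \<Longrightarrow> A \<subseteq> J"
    "\<And>A C. A \<in> B \<Longrightarrow> C \<in> B \<Longrightarrow> A \<union> C \<in> B"
    "\<And>A C. A \<in> B \<Longrightarrow> C \<in> B \<Longrightarrow> A \<inter> C \<in> B"
proof -
  show e: "{} \<in> B" using assms unfolding set_algebra_def by blast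
  show "J \<in> B" using assms e unfolding set_algebra_def by (metis Diff_empty)
  show s: "\<And>A. A \<in> B \<Longrightarrow> A \<subseteq> J" using assms unfolding set_algebra_def by blast
  show "\<And>A C. A \<in> B \<Longrightarrow> C \<in> B \<Longrightarrow> A \<union> C \<in> B" using assms unfolding set_algebra_def by blast
  fix A C assume a: "A \<in> B" "C \<in> B"
  have "A \<inter> C = J - ((J - A) \<union> (J - C))" using s a by blast
  moreover have "J - ((J - A) \<union> (J - C)) \<in> B" using assms a unfolding set_algebra_def by blast
  ultimately show "A \<inter> C \<in> B" by simp
qed

lemma sa_union_finite:
  assumes "set_algebra J B" "finite I" "\<forall>i\<in>I. A i \<in> B"
  shows "(\<Union>i\<in>I. A i) \<in> B"
  using assms(2,3)
proof (induction I rule: finite_induct)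
  case empty then show ?case using sa_basic[OF assms(1)] by simp
next
  case (insert x F) then show ?case using sa_basic[OF assms(1)] by simp
qed

lemma meas_comp:
  assumes sa: "set_algebra J B" and F: "meas_map J B k F"
    and G: "\<forall>i\<in>{1..k}. G i \<in> {1..m}"
  shows "meas_map J B m (\<lambda>j. G (F j))"
  unfolding meas_map_def
proof (intro conjI ballI)
  fix j assume "j \<in> J" then show "G (F j) \<in> {1..m}" using F G unfolding meas_map_def by blast
next
  fix i assume "i \<in> {1..m}"
  have "{j\<in>J. G (F j) = i} = (\<Union>l\<in>{l\<in>{1..k}. G l = i}. {j\<in>J. F j = l})"
    using F unfolding meas_map_def by blast
  moreover have "(\<Union>l\<in>{l\<in>{1..k}. G l = i}. {j\<in>J. F j = l}) \<in> B"
    by (rule sa_union_finite[OF sa]) (use F in \<open>auto simp: meas_map_def\<close>)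
  ultimately show "{j\<in>J. G (F j) = i} \<in> B" by simp
qed

lemma quot_comp:
  assumes F: "meas_map J B k F"
  shows "quot {1..k} (quot J \<phi> k F) m G = quot J \<phi> m (\<lambda>j. G (F j))"
proof
  fix A
  have "{j\<in>J. F j \<in> {i\<in>{1..k}. G i \<in> A}} = {j\<in>J. G (F j) \<in> A}"
    using F unfolding meas_map_def by blast
  then show "quot {1..k} (quot J \<phi> k F) m G A = quot J \<phi> m (\<lambda>j. G (F j)) A"
    unfolding quot_def by auto
qed

lemma quot_cong:
  assumes "\<forall>j\<in>J. F j = F' j"
  shows "quot J \<phi> m F = quot J \<phi> m F'"
proof -
  have "\<And>A. {j\<in>J. F j \<in> A} = {j\<in>J. F' j \<in> A}" using assms by auto
  then show ?thesis unfolding quot_def by auto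
qed

lemma meas_pow: "meas_map {1..k} (Pow {1..k}) m G \<longleftrightarrow> (\<forall>i\<in>{1..k}. G i \<in> {1..m})"
  unfolding meas_map_def by auto

lemma enc:
  fixes K m a b i :: nat
  assumes "m \<ge> 1"
  shows "a \<in> {1..K} \<Longrightarrow> b \<in> {1..m} \<Longrightarrow> (a - 1) * m + b \<in> {1..K*m}"
    and "a \<ge> 1 \<Longrightarrow> b \<in> {1..m} \<Longrightarrow> ((a - 1) * m + b - 1) div m + 1 = a"
    and "b \<in> {1..m} \<Longrightarrow> ((a - 1) * m + b - 1) mod m + 1 = b"
    and "i \<in> {1..K*m} \<Longrightarrow> (i - 1) div m + 1 \<in> {1..K}"
    and "(i - 1) mod m + 1 \<in> {1..m}"
proof -
  show "a \<in> {1..K} \<Longrightarrow> b \<in> {1..m} \<Longrightarrow> (a - 1) * m + b \<in> {1..K*m}"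
  proof -
    assume a: "a \<in> {1..K}" and b: "b \<in> {1..m}"
    have "(a - 1) * m + b \<le> (a-1)*m + m" using b by simp
    also have "\<dots> = a * m" using a by (cases a) auto
    also have "\<dots> \<le> K * m" using a by simp
    finally show ?thesis using b by simp
  qed
  show "a \<ge> 1 \<Longrightarrow> b \<in> {1..m} \<Longrightarrow> ((a - 1) * m + b - 1) div m + 1 = a"
  proof -
    assume that: "a \<ge> 1" and b: "b \<in> {1..m}"
    have "(a - 1) * m + b - 1 = (a-1)*m + (b - 1)" using b by simp
    moreover have "(b - 1) div m = 0" using b by auto
    moreover have "((a-1)*m + (b - 1)) div m = (b - 1) div m + (a - 1)"
      using assms by (metis add.commute div_mult_self1 not_one_le_zero)
    ultimately have "((a - 1) * m + b - 1) div m = a - 1" by simp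
    then show ?thesis using that by simp
  qed
  show "b \<in> {1..m} \<Longrightarrow> ((a - 1) * m + b - 1) mod m + 1 = b"
  proof -
    assume b: "b \<in> {1..m}"
    have "(a - 1) * m + b - 1 = (a-1)*m + (b - 1)" using b by simp
    moreover have "((a-1)*m + (b - 1)) mod m = b - 1"
      using b by (metis add.commute atLeastAtMost_iff diff_less less_le_trans mod_less mod_mult_self1 zero_less_one)
    ultimately have "((a - 1) * m + b - 1) mod m = b - 1" by simp
    then show ?thesis using b by simp
  qed
  show "i \<in> {1..K*m} \<Longrightarrow> (i - 1) div m + 1 \<in> {1..K}"
  proof -
    assume i: "i \<in> {1..K*m}"
    have "i - 1 < K * m" using i by auto
    then have "(i - 1) div m < K" by (simp add: less_mult_imp_div_less)
    then show ?thesis by simp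
  qed
  show "(i - 1) mod m + 1 \<in> {1..m}"
    using assms by (simp add: Suc_leI)
qed

lemma lift_ind:
  assumes sa: "set_algebra J B"
  shows "finite S \<Longrightarrow> S \<subseteq> Q J B \<phi> \<Longrightarrow> \<exists>K F. K \<ge> 1 \<and> meas_map J B K F \<and>
    (\<forall>s\<in>S. \<exists>m\<ge>1. \<exists>H. meas_map J B m H \<and> s = ({1..m}, quot J \<phi> m H) \<and>
       (\<exists>G. (\<forall>i\<in>{1..K}. G i \<in> {1..m}) \<and> (\<forall>j\<in>J. G (F j) = H j)))"
proof (induction S rule: finite_induct)
  case empty
  have "meas_map J B 1 (\<lambda>_. 1)" unfolding meas_map_def using sa_basic[OF sa] by auto
  then show ?case by blast
next
  case (insert s S)
  then obtain K F where K: "K \<ge> 1" and F: "meas_map J B K F" and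
    IH: "\<forall>s\<in>S. \<exists>m\<ge>1. \<exists>H. meas_map J B m H \<and> s = ({1..m}, quot J \<phi> m H) \<and>
       (\<exists>G. (\<forall>i\<in>{1..K}. G i \<in> {1..m}) \<and> (\<forall>j\<in>J. G (F j) = H j))" by auto
  from insert(4) have "s \<in> Q J B \<phi>" by auto
  then obtain m H where m: "m \<ge> 1" and H: "meas_map J B m H" and s: "s = ({1..m}, quot J \<phi> m H)"
    unfolding Q_def Qk_def by auto
  define F' where "F' j = (F j - 1) * m + H j" for j
  have FJ: "\<And>j. j \<in> J \<Longrightarrow> F j \<in> {1..K}" using F unfolding meas_map_def by blast
  have HJ: "\<And>j. j \<in> J \<Longrightarrow> H j \<in> {1..m}" using H unfolding meas_map_def by blast
  have F': "meas_map J B (K*m) F'"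
    unfolding meas_map_def
  proof (intro conjI ballI)
    fix j assume "j \<in> J" then show "F' j \<in> {1..K*m}" unfolding F'_def using enc(1)[OF m] FJ HJ by blast
  next
    fix i assume "i \<in> {1..K*m}"
    have "{j\<in>J. F' j = i} = (\<Union>p\<in>{p\<in>{1..K}\<times>{1..m}. (fst p - 1) * m + snd p = i}.
            {j\<in>J. F j = fst p} \<inter> {j\<in>J. H j = snd p})"
      unfolding F'_def using FJ HJ by auto
    moreover have "(\<Union>p\<in>{p\<in>{1..K}\<times>{1..m}. (fst p - 1) * m + snd p = i}.
            {j\<in>J. F j = fst p} \<inter> {j\<in>J. H j = snd p}) \<in> B"
      apply (rule sa_union_finite[OF sa])
      using F H sa_basic(5)[OF sa] unfolding meas_map_def by auto
    ultimately show "{j\<in>J. F' j = i} \<in> B" by simp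
  qed
  have old: "\<forall>s\<in>S. \<exists>m'\<ge>1. \<exists>H'. meas_map J B m' H' \<and> s = ({1..m'}, quot J \<phi> m' H') \<and>
       (\<exists>G. (\<forall>i\<in>{1..K*m}. G i \<in> {1..m'}) \<and> (\<forall>j\<in>J. G (F' j) = H' j))"
  proof
    fix s' assume "s' \<in> S"
    then obtain m' H' G where mm: "m' \<ge> 1" "meas_map J B m' H'" "s' = ({1..m'}, quot J \<phi> m' H')"
      and G: "\<forall>i\<in>{1..K}. G i \<in> {1..m'}" "\<forall>j\<in>J. G (F j) = H' j" using IH by blast
    moreover have "\<forall>i\<in>{1..K*m}. G ((i - 1) div m + 1) \<in> {1..m'}" using G(1) enc(4)[OF m] by blast
    moreover have "\<forall>j\<in>J. G ((F' j - 1) div m + 1) = H' j"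
    proof
      fix j assume j: "j \<in> J"
      have "(F' j - 1) div m + 1 = F j" unfolding F'_def
        using enc(2)[OF m, of "F j" "H j"] FJ[OF j] HJ[OF j] by auto
      then show "G ((F' j - 1) div m + 1) = H' j" using G(2) j by simp
    qed
    ultimately show "\<exists>m'\<ge>1. \<exists>H'. meas_map J B m' H' \<and> s' = ({1..m'}, quot J \<phi> m' H') \<and>
       (\<exists>G. (\<forall>i\<in>{1..K*m}. G i \<in> {1..m'}) \<and> (\<forall>j\<in>J. G (F' j) = H' j))"
      by (intro exI[of _ m'] exI[of _ H'] conjI exI[of _ "\<lambda>i. G ((i - 1) div m + 1)"] mm) auto
  qed
  have new: "\<exists>G. (\<forall>i\<in>{1..K*m}. G i \<in> {1..m}) \<and> (\<forall>j\<in>J. G (F' j) = H j)"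
  proof (intro exI[of _ "\<lambda>i. (i - 1) mod m + 1"] conjI ballI)
    fix i show "(i - 1) mod m + 1 \<in> {1..m}" using enc(5)[OF m] .
  next
    fix j assume j: "j \<in> J"
    show "(F' j - 1) mod m + 1 = H j" unfolding F'_def
      using enc(3)[OF m, of "H j" "F j"] HJ[OF j] by auto
  qed
  have "K * m \<ge> 1" using K m by simp
  then show ?case using F' old new m H s by blast
qed

theorem lemma2p4:
  fixes J :: "'a set" and B :: "'a set set" and \<phi> :: "'a set \<Rightarrow> real"
  assumes "set_algebra J B"
    and "\<phi> {} = 0"
  shows "quotient_closed (Q J B \<phi>) \<and> common_lift_property (Q J B \<phi>)"
proof
  note sa = assms(1)
  show "quotient_closed (Q J B \<phi>)"
    unfolding quotient_closed_def
  proof (clarify)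
    fix J0 \<psi> J' \<psi>'
    assume "(J0, \<psi>) \<in> Q J B \<phi>" and q: "is_quotient J0 \<psi> J' \<psi>'"
    then obtain k F where "J0 = {1..k}" "\<psi> = quot J \<phi> k F" and F: "meas_map J B k F"
      unfolding Q_def Qk_def by auto
    moreover obtain m G where "m \<ge> 1" "J' = {1..m}" "meas_map J0 (Pow J0) m G" "\<psi>' = quot J0 \<psi> m G"
      using q unfolding is_quotient_def by auto
    moreover have "meas_map J B m (\<lambda>j. G (F j))"
      by (rule meas_comp[OF sa F]) (use calculation in \<open>simp add: meas_map_def\<close>)
    ultimately have "m \<ge> 1" "J' = {1..m}" "\<psi>' = quot J \<phi> m (\<lambda>j. G (F j))"
      "meas_map J B m (\<lambda>j. G (F j))"
      using quot_comp[OF F] by auto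
    then show "(J', \<psi>') \<in> Q J B \<phi>" unfolding Q_def Qk_def by blast
  qed
  show "common_lift_property (Q J B \<phi>)"
    unfolding common_lift_property_def
  proof (intro allI impI)
    fix S assume S: "S \<subseteq> Q J B \<phi>" "finite S"
    obtain K F where K: "K \<ge> 1" and F: "meas_map J B K F" and
      P: "\<forall>s\<in>S. \<exists>m\<ge>1. \<exists>H. meas_map J B m H \<and> s = ({1..m}, quot J \<phi> m H) \<and>
       (\<exists>G. (\<forall>i\<in>{1..K}. G i \<in> {1..m}) \<and> (\<forall>j\<in>J. G (F j) = H j))"
      using lift_ind[OF sa S(2) S(1)] by blast
    have inQ: "({1..K}, quot J \<phi> K F) \<in> Q J B \<phi>" unfolding Q_def Qk_def using K F by blast
    have "\<forall>(J', \<psi>')\<in>S. is_quotient {1..K} (quot J \<phi> K F) J' \<psi>'"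
    proof (clarify)
      fix J' \<psi>' assume "(J', \<psi>') \<in> S"
      then obtain m H G where "m \<ge> 1" "J' = {1..m}" "\<psi>' = quot J \<phi> m H"
        and G: "\<forall>i\<in>{1..K}. G i \<in> {1..m}" "\<forall>j\<in>J. G (F j) = H j" using P by fastforce
      moreover have "quot {1..K} (quot J \<phi> K F) m G = quot J \<phi> m H"
        using quot_comp[OF F] quot_cong[OF G(2)] by simp
      ultimately show "is_quotient {1..K} (quot J \<phi> K F) J' \<psi>'"
        unfolding is_quotient_def using meas_pow by metis
    qed
    then show "\<exists>(J, \<psi>)\<in>Q J B \<phi>. \<forall>(J', \<psi>')\<in>S. is_quotient J \<psi> J' \<psi>'" using inQ by blast
  qed
qed

end
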